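(* Let $\mathbf k$ be a field of characteristic $2$ which is finite or algebraically closed, $V$ a $\mathbf k$-vector space of even dimension $D$ with a nondegenerate quadratic form $Q$, and assume there exists a $D/2$-dimensional subspace $S\subset V$ with $Q|_S=0$. Let $N\in\tilde{\mathcal M}_Q$. Then for any such $S$, $\dim\big(S/(S\cap(1+N)(S))\big)\equiv\dim\ker N\pmod 2$.
   Context: $\langle x,y\rangle=Q(x+y)-Q(x)-Q(y)$ (here alternating, since the characteristic is $2$), with radical $R$; $Q$ is nondegenerate if $Q|_R$ is injective (for $D$ even this forces $R=0$). $\tilde{\mathcal M}_Q$ is the set of nilpotent $N\in\mathrm{End}(V)$ with $Q(Nx)=-\langle x,Nx\rangle$ for all $x\in V$ (equivalently, $1+N$ is a unipotent element of the orthogonal group $O_Q$). *)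

theory Defs
  imports "HOL-Analysis.Analysis" "HOL-Computational_Algebra.Polynomial"
begin

text \<open>Algebraically closed field: every nonconstant polynomial has a root.\<close>
definition alg_closed_type :: "'k::field itself \<Rightarrow> bool" where
  "alg_closed_type _ \<longleftrightarrow> (\<forall>p::'k poly. degree p > 0 \<longrightarrow> (\<exists>x. poly p x = 0))"

text \<open>Polar form of Q.\<close>
definition polar :: "('k::field ^ 'n \<Rightarrow> 'k) \<Rightarrow> 'k ^ 'n \<Rightarrow> 'k ^ 'n \<Rightarrow> 'k" where
  "polar Q x y = Q (x + y) - Q x - Q y"

definition quadratic_form :: "('k::field ^ 'n \<Rightarrow> 'k) \<Rightarrow> bool" where
  "quadratic_form Q \<longleftrightarrow>
     (\<forall>c x. Q (c *s x) = c ^ 2 * Q x) \<and>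
     (\<forall>x y z. polar Q (x + y) z = polar Q x z + polar Q y z) \<and>
     (\<forall>c x y. polar Q (c *s x) y = c * polar Q x y)"

definition qf_radical :: "('k::field ^ 'n \<Rightarrow> 'k) \<Rightarrow> ('k ^ 'n) set" where
  "qf_radical Q = {x. \<forall>y. polar Q x y = 0}"

definition qf_nondegenerate :: "('k::field ^ 'n \<Rightarrow> 'k) \<Rightarrow> bool" where
  "qf_nondegenerate Q \<longleftrightarrow> inj_on Q (qf_radical Q)"

text \<open>Totally singular subspace of dimension D/2.\<close>
definition lagrangian :: "('k::field ^ 'n \<Rightarrow> 'k) \<Rightarrow> ('k ^ 'n) set \<Rightarrow> bool" where
  "lagrangian Q S \<longleftrightarrow> vec.subspace S \<and> vec.dim S = CARD('n) div 2 \<and> (\<forall>x\<in>S. Q x = 0)"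

text \<open>The set \<open>\<tilde>M_Q\<close>: nilpotent endomorphisms N with Q(Nx) = - <x, Nx>.\<close>
definition M_tilde :: "('k::field ^ 'n \<Rightarrow> 'k) \<Rightarrow> ('k ^ 'n \<Rightarrow> 'k ^ 'n) set" where
  "M_tilde Q = {N. Vector_Spaces.linear (*s) (*s) N \<and> (\<exists>m. \<forall>x. (N ^^ m) x = 0) \<and>
                   (\<forall>x. Q (N x) = - polar Q x (N x))}"

end

theory Submission
  imports Defs
begin

lemma rank_nullity_vec:
  fixes f :: "'k::field^'n \<Rightarrow> 'k^'n"
  assumes lin: "Vector_Spaces.linear (*s) (*s) f" and A: "vec.subspace A"
  shows "vec.dim A = vec.dim (f ` A) + vec.dim {x\<in>A. f x = 0}"
proof -
  interpret lf: Vector_Spaces.linear "(*s)" "(*s)" f by (rule lin)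
  define K where "K = {x\<in>A. f x = 0}"
  have subK: "vec.subspace K" unfolding K_def
    using A unfolding vec.subspace_def by (auto simp: lf.add lf.scale)
  obtain BK where BK: "BK \<subseteq> K" "vec.independent BK" "K \<subseteq> vec.span BK" "card BK = vec.dim K"
    using vec.basis_exists[of K] by blast
  have "BK \<subseteq> A" using BK(1) K_def by auto
  then obtain C where C: "BK \<subseteq> C" "C \<subseteq> A" "vec.independent C" "A \<subseteq> vec.span C"
    using vec.maximal_independent_subset_extend[OF _ BK(2)] by metis
  define E where "E = C - BK"
  have finC: "finite C" using C(3) vec.finiteI_independent by blast
  have indE: "vec.independent E" using C(3) E_def vec.independent_mono by blast
  have CU: "C = BK \<union> E" using C(1) E_def by auto
  have cardC: "card C = card BK + card E"
    using finC CU E_def by (metis Diff_disjoint card_Un_disjoint finite_Un)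
  have spanC: "vec.span C = A"
    using C A vec.span_subspace by blast
  have dimA: "vec.dim A = card C" using spanC vec.dim_span_eq_card_independent[OF C(3)] by simp
  have dimK: "vec.dim K = card BK" using BK by simp
  have sums: "{x + y |x y. x \<in> vec.span BK \<and> y \<in> vec.span E} = vec.span C"
    by (simp only: CU vec.span_Un)
  have "vec.dim (vec.span C) + vec.dim (vec.span BK \<inter> vec.span E) = vec.dim (vec.span BK) + vec.dim (vec.span E)"
    using vec.dim_sums_Int[of "vec.span BK" "vec.span E"] sums by (metis vec.subspace_span)
  then have "vec.dim (vec.span BK \<inter> vec.span E) = 0"
    using vec.dim_span_eq_card_independent[OF C(3)] vec.dim_span_eq_card_independent[OF BK(2)]
      vec.dim_span_eq_card_independent[OF indE] cardC by linarith
  then have int0: "vec.span BK \<inter> vec.span E \<subseteq> {0}" by (simp only: vec.dim_eq_0)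
  have spanEA: "vec.span E \<subseteq> A"
    using C(2) E_def A vec.span_minimal[of E A] by auto
  have inj: "inj_on f (vec.span (vec.span E))"
  proof (rule inj_onI)
    fix x y assume xy: "x \<in> vec.span (vec.span E)" "y \<in> vec.span (vec.span E)" "f x = f y"
    then have "x - y \<in> vec.span E" using vec.span_diff by (simp add: vec.span_span)
    moreover have "f (x - y) = 0" using xy(3) lf.diff by simp
    ultimately have "x - y \<in> K" using spanEA K_def by auto
    with \<open>x - y \<in> vec.span E\<close> have "x - y \<in> {0}" using BK(3) int0 by blast
    then show "x = y" by simp
  qed
  have img: "f ` A = f ` vec.span E"
  proof
    show "f ` vec.span E \<subseteq> f ` A" using spanEA by blast
    show "f ` A \<subseteq> f ` vec.span E"
    proof
      fix z assume "z \<in> f ` A"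
      then obtain x where x: "x \<in> A" "z = f x" by blast
      then have "x \<in> vec.span C" using spanC by simp
      then obtain k e where ke: "x = k + e" "k \<in> vec.span BK" "e \<in> vec.span E"
        using sums by blast
      have "k \<in> K" using ke(2) BK(1) subK vec.span_minimal by blast
      then have "f k = 0" using K_def by simp
      then have "z = f e" using x ke lf.add by simp
      then show "z \<in> f ` vec.span E" using ke by blast
    qed
  qed
  have "vec.dim (f ` A) = card E"
    using img vec.dim_image_eq[OF lin inj] vec.dim_span_eq_card_independent[OF indE] by simp
  then show ?thesis using dimA dimK cardC K_def by simp
qed


lemma vec_linearI:
  fixes f :: "'k::field^'n \<Rightarrow> 'k^'n"
  assumes "\<And>x y. f (x+y) = f x + f y" "\<And>c x. f (c *s x) = c *s f x"
  shows "Vector_Spaces.linear (*s) (*s) f"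
  unfolding Vector_Spaces.linear_iff using assms vec.vector_space_axioms by auto

lemma hyperplane_dim:
  fixes \<phi> :: "'k::field^'n \<Rightarrow> 'k"
  assumes add: "\<And>x y. \<phi> (x + y) = \<phi> x + \<phi> y" and sc: "\<And>c x. \<phi> (c *s x) = c * \<phi> x"
    and A: "vec.subspace A" and z: "z \<in> A" "\<phi> z \<noteq> 0"
  shows "vec.dim {w\<in>A. \<phi> w = 0} + 1 = vec.dim A"
proof -
  define e :: "'k^'n" where "e = axis undefined 1"
  have e0: "e \<noteq> 0" unfolding e_def by (simp add: axis_eq_0_iff)
  define f where "f x = \<phi> x *s e" for x
  have lin: "Vector_Spaces.linear (*s) (*s) f"
    by (rule vec_linearI) (simp_all add: f_def add sc vec.scale_left_distrib)
  have ker: "{x\<in>A. f x = 0} = {w\<in>A. \<phi> w = 0}"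
    using e0 by (auto simp: f_def)
  have img: "f ` A = vec.span {e}"
  proof
    show "f ` A \<subseteq> vec.span {e}" by (auto simp: f_def vec.span_singleton)
    show "vec.span {e} \<subseteq> f ` A"
    proof
      fix y assume "y \<in> vec.span {e}"
      then obtain c where c: "y = c *s e" by (auto simp: vec.span_singleton)
      have "(c / \<phi> z) *s z \<in> A" using A z(1) vec.subspace_scale by blast
      moreover have "f ((c / \<phi> z) *s z) = y" using z(2) by (simp add: f_def sc c)
      ultimately show "y \<in> f ` A" by (metis image_eqI)
    qed
  qed
  have "vec.dim (f ` A) = 1" using img e0 by simp
  then show ?thesis using rank_nullity_vec[OF lin A] ker by simp
qed


definition bil :: "('k::field^'n \<Rightarrow> 'k^'n \<Rightarrow> 'k) \<Rightarrow> bool" where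
  "bil a \<longleftrightarrow> (\<forall>x y z. a (x+y) z = a x z + a y z) \<and> (\<forall>c x z. a (c *s x) z = c * a x z) \<and>
     (\<forall>x y z. a x (y+z) = a x y + a x z) \<and> (\<forall>c x z. a x (c *s z) = c * a x z)"

lemma bilD:
  assumes "bil a"
  shows "a (x+y) z = a x z + a y z" "a (c *s x) z = c * a x z"
    "a x (y+z) = a x y + a x z" "a x (c *s z) = c * a x z"
    "a (x-y) z = a x z - a y z" "a x (y-z) = a x y - a x z"
    "a 0 z = 0" "a x 0 = 0"
proof -
  show 1: "a (x+y) z = a x z + a y z" "a (c *s x) z = c * a x z"
    "a x (y+z) = a x y + a x z" "a x (c *s z) = c * a x z" using assms unfolding bil_def by auto
  have A1: "\<forall>x y z. a (x+y) z = a x z + a y z" and A2: "\<forall>x y z. a x (y+z) = a x y + a x z"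
    using assms unfolding bil_def by auto
  from A1[rule_format, of "x-y" y z] show "a (x-y) z = a x z - a y z" by simp
  from A2[rule_format, of x "y-z" z] show "a x (y-z) = a x y - a x z" by simp
  have A3: "\<forall>c x z. a (c *s x) z = c * a x z" and A4: "\<forall>c x z. a x (c *s z) = c * a x z"
    using assms unfolding bil_def by auto
  from A3[rule_format, of 0 0 z] show "a 0 z = 0" by simp
  from A4[rule_format, of x 0 0] show "a x 0 = 0" by simp
qed

lemma alt_even:
  fixes a :: "'k::field^'n \<Rightarrow> 'k^'n \<Rightarrow> 'k"
  assumes bl: "bil a" and "vec.subspace Y" and "\<forall>y\<in>Y. a y y = 0"
  shows "even (vec.dim Y - vec.dim {y\<in>Y. \<forall>x\<in>Y. a x y = 0})"
  using assms(2,3)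
proof (induction "vec.dim Y" arbitrary: Y rule: less_induct)
  case less
  note sub = less.prems(1) and alt = less.prems(2)
  let ?R = "{y\<in>Y. \<forall>x\<in>Y. a x y = 0}"
  show ?case
  proof (cases "?R = Y")
    case True
    then show ?thesis by simp
  next
    case False
    then obtain y0 where y0: "y0 \<in> Y" "\<not>(\<forall>x\<in>Y. a x y0 = 0)" by auto
    then obtain x0 where x0: "x0 \<in> Y" "a x0 y0 \<noteq> 0" by auto
    define x1 where "x1 = (1 / a x0 y0) *s x0"
    have x1Y: "x1 \<in> Y" unfolding x1_def using sub x0(1) vec.subspace_scale by blast
    have a1: "a x1 y0 = 1" unfolding x1_def using x0(2) bilD[OF bl] by simp
    have skew: "a u v = - a v u" if "u \<in> Y" "v \<in> Y" for u v
    proof -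
      have "u + v \<in> Y" using sub that vec.subspace_add by blast
      then have "0 = a (u+v) (u+v)" using alt by simp
      also have "\<dots> = a u u + a u v + a v u + a v v" using bilD[OF bl] by simp
      also have "\<dots> = a u v + a v u" using alt that by simp
      finally show ?thesis by (simp add: eq_neg_iff_add_eq_0)
    qed
    have a2: "a y0 x1 = -1" using skew[OF y0(1) x1Y] a1 by simp
    define Y1 where "Y1 = {w\<in>Y. a x1 w = 0}"
    define Y2 where "Y2 = {w\<in>Y1. a y0 w = 0}"
    have sub1: "vec.subspace Y1" using sub unfolding Y1_def vec.subspace_def
      using bilD[OF bl] by auto
    have sub2: "vec.subspace Y2" using sub1 unfolding Y2_def vec.subspace_def
      using bilD[OF bl] by auto
    have d1: "vec.dim Y1 + 1 = vec.dim Y" unfolding Y1_def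
      by (rule hyperplane_dim[OF _ _ sub y0(1)]) (simp_all add: bilD[OF bl] a1)
    have x1Y1: "x1 \<in> Y1" unfolding Y1_def using x1Y alt by simp
    have d2: "vec.dim Y2 + 1 = vec.dim Y1" unfolding Y2_def
      by (rule hyperplane_dim[OF _ _ sub1 x1Y1]) (simp_all add: bilD[OF bl] a2)
    have Y2Y: "Y2 \<subseteq> Y" unfolding Y2_def Y1_def by auto
    have R2: "{y\<in>Y2. \<forall>x\<in>Y2. a x y = 0} = ?R"
    proof
      show "?R \<subseteq> {y\<in>Y2. \<forall>x\<in>Y2. a x y = 0}"
        using x1Y y0(1) Y2Y unfolding Y2_def Y1_def by auto
      show "{y\<in>Y2. \<forall>x\<in>Y2. a x y = 0} \<subseteq> ?R"
      proof
        fix y assume y: "y \<in> {y\<in>Y2. \<forall>x\<in>Y2. a x y = 0}"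
        then have yY: "y \<in> Y" and ya: "a x1 y = 0" "a y0 y = 0"
          unfolding Y2_def Y1_def by auto
        have "a x y = 0" if xY: "x \<in> Y" for x
        proof -
          define x' where "x' = x + (a y0 x) *s x1 - (a x1 x) *s y0"
          have x'Y: "x' \<in> Y" unfolding x'_def
            using sub xY x1Y y0(1) vec.subspace_add vec.subspace_diff vec.subspace_scale by metis
          have "a x1 x' = a x1 x + (a y0 x) * a x1 x1 - (a x1 x) * a x1 y0"
            unfolding x'_def using bilD[OF bl] by simp
          also have "\<dots> = 0" using a1 alt x1Y by simp
          finally have e1: "a x1 x' = 0" .
          have "a y0 x' = a y0 x + (a y0 x) * a y0 x1 - (a x1 x) * a y0 y0"
            unfolding x'_def using bilD[OF bl] by simp
          also have "\<dots> = 0" using a2 alt y0(1) by simp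
          finally have e2: "a y0 x' = 0" .
          have "x' \<in> Y2" unfolding Y2_def Y1_def using x'Y e1 e2 by simp
          then have "a x' y = 0" using y by simp
          moreover have "a x' y = a x y + (a y0 x) * a x1 y - (a x1 x) * a y0 y"
            unfolding x'_def using bilD[OF bl] by simp
          ultimately show ?thesis using ya by simp
        qed
        then show "y \<in> ?R" using yY by simp
      qed
    qed
    have lt: "vec.dim Y2 < vec.dim Y" using d1 d2 by simp
    have alt2: "\<forall>y\<in>Y2. a y y = 0" using alt Y2Y by auto
    have ih: "even (vec.dim Y2 - vec.dim {y\<in>Y2. \<forall>x\<in>Y2. a x y = 0})"
      using less.hyps[OF lt sub2 alt2] .
    have "?R \<subseteq> Y2" using R2 by blast
    then have le: "vec.dim ?R \<le> vec.dim Y2" by (rule vec.dim_subset)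
    have e: "even (vec.dim Y2 - vec.dim ?R)" using ih R2 by simp
    have "vec.dim Y - vec.dim ?R = (vec.dim Y2 - vec.dim ?R) + 2" using le d1 d2 by linarith
    then show ?thesis using e by simp
  qed
qed

definition orth :: "('k::field^'n \<Rightarrow> 'k^'n \<Rightarrow> 'k) \<Rightarrow> ('k^'n) set \<Rightarrow> ('k^'n) set" where
  "orth B U = {x. \<forall>u\<in>U. B x u = 0}"

lemma dim_le_CARD:
  fixes U :: "('k::field^'n) set"
  shows "vec.dim U \<le> CARD('n)"
proof -
  have "vec.dim U \<le> vec.dim (UNIV :: ('k^'n) set)" by (rule vec.dim_subset) simp
  then show ?thesis by (simp add: card_cart_basis)
qed

lemma orth_subspace:
  assumes bl: "bil B" shows "vec.subspace (orth B U)"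
  unfolding vec.subspace_def orth_def using bilD[OF bl] by auto

lemma vanish_span:
  assumes bl: "bil B" and "\<forall>u\<in>Bs. B x u = 0" and "v \<in> vec.span Bs"
  shows "B x v = 0"
proof -
  have "vec.subspace {v. B x v = 0}" unfolding vec.subspace_def using bilD[OF bl] by auto
  moreover have "Bs \<subseteq> {v. B x v = 0}" using assms(2) by blast
  ultimately have "vec.span Bs \<subseteq> {v. B x v = 0}" using vec.span_minimal[of Bs] by simp
  then show ?thesis using assms(3) by blast
qed

lemma orth_ge:
  fixes B :: "'k::field^'n \<Rightarrow> 'k^'n \<Rightarrow> 'k"
  assumes bl: "bil B" and U: "vec.subspace U"
  shows "CARD('n) \<le> vec.dim (orth B U) + vec.dim U"
proof -
  obtain Bs where Bs: "Bs \<subseteq> U" "vec.independent Bs" "U \<subseteq> vec.span Bs" "card Bs = vec.dim U"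
    using vec.basis_exists[of U] by blast
  have finBs: "finite Bs" using Bs(2) vec.finiteI_independent by blast
  have "card Bs \<le> CARD('n)" using Bs(4) dim_le_CARD[of U] by simp
  then obtain \<iota> :: "'k^'n \<Rightarrow> 'n" where \<iota>: "inj_on \<iota> Bs"
    using card_le_inj[OF finBs, of "UNIV :: 'n set"] by auto
  define f where "f x = (\<Sum>u\<in>Bs. B x u *s (axis (\<iota> u) 1 :: 'k^'n))" for x
  have lin: "Vector_Spaces.linear (*s) (*s) f"
  proof (rule vec_linearI)
    fix x y show "f (x + y) = f x + f y"
      unfolding f_def by (simp add: bilD[OF bl] vec.scale_left_distrib sum.distrib)
  next
    fix c x show "f (c *s x) = c *s f x"
      unfolding f_def by (simp add: bilD[OF bl] vec.scale_sum_right vec.scale_scale)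
  qed
  have comp: "f x $ \<iota> u = B x u" if "u \<in> Bs" for x u
  proof -
    have "f x $ \<iota> u = (\<Sum>u'\<in>Bs. if u' = u then B x u' else 0)"
      unfolding f_def sum_component
      apply (rule sum.cong[OF refl])
      using \<iota> that by (auto simp: axis_def inj_on_eq_iff)
    also have "\<dots> = B x u" using finBs that by simp
    finally show ?thesis .
  qed
  have ker: "{x\<in>UNIV. f x = 0} \<subseteq> orth B U"
  proof
    fix x assume "x \<in> {x\<in>UNIV. f x = 0}"
    then have fx: "f x = 0" by simp
    have "\<forall>u\<in>Bs. B x u = 0"
    proof
      fix u assume "u \<in> Bs"
      then have "B x u = f x $ \<iota> u" using comp by simp
      then show "B x u = 0" using fx by simp
    qed
    then have "\<forall>v\<in>vec.span Bs. B x v = 0" using vanish_span[OF bl] by blast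
    then show "x \<in> orth B U" unfolding orth_def using Bs(3) by auto
  qed
  define E where "E = (\<lambda>u. axis (\<iota> u) 1 :: 'k^'n) ` Bs"
  have "f x \<in> vec.span E" for x
    unfolding f_def E_def
    apply (rule vec.span_sum) apply (rule vec.span_scale) apply (rule vec.span_base) by simp
  then have "f ` UNIV \<subseteq> vec.span E" by auto
  moreover have "finite E" unfolding E_def using finBs by simp
  ultimately have "vec.dim (f ` UNIV) \<le> card E" by (rule vec.dim_le_card)
  also have "\<dots> \<le> card Bs" unfolding E_def using finBs card_image_le by blast
  finally have "vec.dim (f ` UNIV) \<le> vec.dim U" using Bs(4) by simp
  moreover have "vec.dim {x\<in>UNIV. f x = 0} \<le> vec.dim (orth B U)" using ker by (rule vec.dim_subset)
  moreover have "CARD('n) = vec.dim (f ` UNIV) + vec.dim {x\<in>UNIV. f x = 0}"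
    using rank_nullity_vec[OF lin vec.subspace_UNIV] by (simp add: card_cart_basis)
  ultimately show ?thesis by linarith
qed

lemma orth_dim:
  fixes B :: "'k::field^'n \<Rightarrow> 'k^'n \<Rightarrow> 'k"
  assumes bl: "bil B" and nd: "\<forall>x. (\<forall>y. B x y = 0) \<longrightarrow> x = 0" and U: "vec.subspace U"
  shows "vec.dim (orth B U) + vec.dim U = CARD('n)"
proof -
  obtain Bs where Bs: "Bs \<subseteq> U" "vec.independent Bs" "U \<subseteq> vec.span Bs" "card Bs = vec.dim U"
    using vec.basis_exists[of U] by blast
  obtain Bs' where Bs': "Bs \<subseteq> Bs'" "Bs' \<subseteq> UNIV" "vec.independent Bs'" "UNIV \<subseteq> vec.span Bs'"
    by (rule vec.maximal_independent_subset_extend[OF subset_UNIV Bs(2)])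
  have fin': "finite Bs'" using Bs'(3) vec.finiteI_independent by blast
  have "card Bs' = CARD('n)"
  proof -
    have "vec.span Bs' = UNIV" using Bs'(4) by auto
    then show ?thesis using vec.dim_span_eq_card_independent[OF Bs'(3)] by (simp add: card_cart_basis)
  qed
  define Cc where "Cc = vec.span (Bs' - Bs)"
  have "vec.dim Cc \<le> card (Bs' - Bs)" unfolding Cc_def
    using vec.dim_le_card[of "vec.span (Bs' - Bs)" "Bs' - Bs"] fin' by (simp add: vec.span_span)
  also have "\<dots> = CARD('n) - vec.dim U"
    using Bs(4) Bs'(1) \<open>card Bs' = CARD('n)\<close> fin' by (simp add: card_Diff_subset finite_subset)
  finally have dimC: "vec.dim Cc \<le> CARD('n) - vec.dim U" .
  have spanBs: "vec.span Bs \<subseteq> U" using Bs(1) U vec.span_minimal by blast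
  have int: "orth B U \<inter> orth B Cc \<subseteq> {0}"
  proof
    fix x assume x: "x \<in> orth B U \<inter> orth B Cc"
    have "B x y = 0" for y
    proof -
      have BB: "Bs \<union> (Bs' - Bs) = Bs'" using Bs'(1) by auto
      have ys: "y \<in> vec.span Bs'" using Bs'(4) by auto
      have spe: "vec.span Bs' = {x + y |x y. x \<in> vec.span Bs \<and> y \<in> vec.span (Bs' - Bs)}"
        using vec.span_Un[of Bs "Bs' - Bs"] unfolding BB .
      have "y \<in> {x + y |x y. x \<in> vec.span Bs \<and> y \<in> vec.span (Bs' - Bs)}"
        using ys unfolding spe .
      then have "\<exists>p q. y = p + q \<and> p \<in> vec.span Bs \<and> q \<in> vec.span (Bs' - Bs)"
        by (simp only: mem_Collect_eq)
      then obtain p q where pq: "y = p + q" "p \<in> vec.span Bs" "q \<in> vec.span (Bs' - Bs)"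
        by (elim exE conjE)
      have "p \<in> U" using pq(2) spanBs by blast
      then have "B x p = 0" using x unfolding orth_def by simp
      moreover have "B x q = 0" using x pq(3) unfolding orth_def Cc_def by simp
      ultimately show ?thesis using pq(1) bilD(3)[OF bl, of x p q] by simp
    qed
    then show "x \<in> {0}" using nd by simp
  qed
  have "vec.dim {x + y |x y. x \<in> orth B U \<and> y \<in> orth B Cc} + vec.dim (orth B U \<inter> orth B Cc)
      = vec.dim (orth B U) + vec.dim (orth B Cc)"
    by (rule vec.dim_sums_Int[OF orth_subspace[OF bl] orth_subspace[OF bl]])
  moreover have "vec.dim (orth B U \<inter> orth B Cc) = 0" by (subst vec.dim_eq_0) (rule int)
  moreover have "vec.dim {x + y |x y. x \<in> orth B U \<and> y \<in> orth B Cc} \<le> CARD('n)"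
    by (rule dim_le_CARD)
  moreover have "CARD('n) \<le> vec.dim (orth B Cc) + vec.dim Cc"
    using orth_ge[OF bl, of Cc] Cc_def vec.subspace_span by blast
  moreover have "CARD('n) \<le> vec.dim (orth B U) + vec.dim U" using orth_ge[OF bl U] .
  moreover have "vec.dim U \<le> CARD('n)" by (rule dim_le_CARD)
  ultimately show ?thesis using dimC by linarith
qed

lemma orth_orth:
  fixes B :: "'k::field^'n \<Rightarrow> 'k^'n \<Rightarrow> 'k"
  assumes bl: "bil B" and sym: "\<forall>x y. B x y = B y x" and nd: "\<forall>x. (\<forall>y. B x y = 0) \<longrightarrow> x = 0"
    and U: "vec.subspace U"
  shows "orth B (orth B U) = U"
proof -
  have sub: "U \<subseteq> orth B (orth B U)" unfolding orth_def using sym by auto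
  have deq: "vec.dim (orth B (orth B U)) = vec.dim U"
    using orth_dim[OF bl nd U] orth_dim[OF bl nd orth_subspace[OF bl, of U]] by linarith
  have "U = orth B (orth B U)"
    by (rule vec.subspace_dim_equal[OF U orth_subspace[OF bl] sub]) (simp add: deq)
  then show ?thesis by simp
qed

lemma char2_two: assumes "CHAR('k::field) = 2" shows "(2::'k) = 0"
  using of_nat_CHAR[where 'a='k] assms by simp

lemma sqrt_exists:
  assumes two: "(2::'k::field) = 0" and fa: "finite (UNIV :: 'k set) \<or> alg_closed_type TYPE('k)"
  shows "\<exists>c::'k. c * c = a"
  using fa
proof
  assume fin: "finite (UNIV :: 'k set)"
  have "inj (\<lambda>x::'k. x * x)"
  proof (rule injI)
    fix x y :: 'k assume xy: "x * x = y * y"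
    have "(x - y) * (x - y) = x * x + y * y - 2 * (x * y)" by (simp add: algebra_simps)
    also have "\<dots> = 2 * (y * y)" using two xy by (simp add: mult_2)
    also have "\<dots> = 0" using two by simp
    finally show "x = y" by simp
  qed
  then have "surj (\<lambda>x::'k. x * x)" using fin finite_UNIV_inj_surj by blast
  then show ?thesis by (metis surjD)
next
  assume ac: "alg_closed_type TYPE('k)"
  define p where "p = [:-a, 0, 1:]"
  have "degree p = 2" unfolding p_def by simp
  moreover have "\<forall>p::'k poly. 0 < degree p \<longrightarrow> (\<exists>x. poly p x = 0)"
    using ac unfolding alg_closed_type_def by simp
  ultimately have "\<exists>x. poly p x = 0" by simp
  then obtain c where "poly p c = 0" by blast
  then have "c * c = a" unfolding p_def by (simp add: algebra_simps)
  then show ?thesis by blast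
qed

lemma even_sub_aux: "a \<le> (b::nat) \<Longrightarrow> even b \<Longrightarrow> even (b - a) \<Longrightarrow> even a"
  by presburger

lemma vec_add_self:
  assumes two: "(2::'k::field) = 0"
  shows "(x::'k^'n) + x = 0"
proof -
  have "x $ i + x $ i = 0" for i
  proof -
    have "x $ i + x $ i = 2 * x $ i" by (rule mult_2[symmetric])
    then show ?thesis using two by simp
  qed
  then show ?thesis by (simp add: vec_eq_iff)
qed

lemma polar_sym: "polar Q x y = polar Q y x"
  unfolding polar_def by (simp add: add.commute)

lemma qf_bil: assumes qf: "quadratic_form Q" shows "bil (polar Q)"
proof -
  have 1: "\<forall>x y z. polar Q (x + y) z = polar Q x z + polar Q y z"
    and 2: "\<forall>c x y. polar Q (c *s x) y = c * polar Q x y"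
    using qf unfolding quadratic_form_def by auto
  have 3: "\<forall>x y z. polar Q x (y + z) = polar Q x y + polar Q x z"
  proof (intro allI)
    fix x y z
    have "polar Q x (y+z) = polar Q (y+z) x" by (rule polar_sym)
    also have "\<dots> = polar Q y x + polar Q z x" using 1 by simp
    also have "\<dots> = polar Q x y + polar Q x z" using polar_sym[of Q y x] polar_sym[of Q z x] by simp
    finally show "polar Q x (y + z) = polar Q x y + polar Q x z" .
  qed
  have 4: "\<forall>c x y. polar Q x (c *s y) = c * polar Q x y"
  proof (intro allI)
    fix c x y
    have "polar Q x (c *s y) = polar Q (c *s y) x" by (rule polar_sym)
    also have "\<dots> = c * polar Q y x" using 2 by simp
    also have "\<dots> = c * polar Q x y" using polar_sym[of Q y x] by simp
    finally show "polar Q x (c *s y) = c * polar Q x y" .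
  qed
  show ?thesis unfolding bil_def using 1 2 3 4 by blast
qed

lemma qf_zero: assumes qf: "quadratic_form Q" shows "Q 0 = 0"
proof -
  have "Q ((0::'a) *s 0) = 0\<^sup>2 * Q 0" using qf unfolding quadratic_form_def by blast
  then show ?thesis by simp
qed

lemma qf_scale: assumes qf: "quadratic_form Q" shows "Q (c *s x) = c\<^sup>2 * Q x"
proof -
  have "\<forall>c x. Q (c *s x) = c ^ 2 * Q x" using qf unfolding quadratic_form_def by (rule conjunct1)
  then show ?thesis by simp
qed

lemma le1_even: "a \<le> (1::nat) \<Longrightarrow> even a \<Longrightarrow> a = 0"
  by presburger

lemma qf_add: "Q (x + y) = Q x + Q y + polar Q x y"
  unfolding polar_def by simp

lemma polar_self:
  assumes qf: "quadratic_form Q" and two: "(2::'k::field) = 0"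
  shows "polar Q (x::'k^'n) x = 0"
proof -
  have "polar Q x x = Q (x + x) - Q x - Q x" unfolding polar_def by simp
  also have "\<dots> = - (Q x + Q x)" using vec_add_self[OF two, of x] qf_zero[OF qf] by simp
  also have "Q x + Q x = 2 * Q x" by (rule mult_2[symmetric])
  also have "- (2 * Q x) = 0" using two by simp
  finally show ?thesis .
qed

lemma nondeg:
  fixes Q :: "'k::field^'n \<Rightarrow> 'k"
  assumes qf: "quadratic_form Q" and two: "(2::'k) = 0" and sq: "\<And>a::'k. \<exists>c. c * c = a"
    and nd: "qf_nondegenerate Q" and ev: "even CARD('n)"
  shows "\<forall>x. (\<forall>y. polar Q x y = 0) \<longrightarrow> x = 0"
proof -
  define R where "R = qf_radical Q"
  have Rdef: "R = {x. \<forall>y. polar Q x y = 0}" unfolding R_def qf_radical_def ..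
  have bl: "bil (polar Q)" by (rule qf_bil[OF qf])
  have subR: "vec.subspace R" unfolding Rdef vec.subspace_def using bilD[OF bl] by auto
  have "even (vec.dim (UNIV :: ('k^'n) set) - vec.dim {y\<in>UNIV. \<forall>x\<in>UNIV. polar Q x y = 0})"
    by (rule alt_even[OF bl vec.subspace_UNIV]) (simp add: polar_self[OF qf two])
  moreover have "{y\<in>UNIV. \<forall>x\<in>UNIV. polar Q x y = 0} = R"
  proof -
    have "(\<forall>x\<in>UNIV. polar Q x y = 0) \<longleftrightarrow> (\<forall>x. polar Q y x = 0)" for y
    proof -
      have e: "\<And>x. polar Q x y = polar Q y x" by (rule polar_sym)
      show ?thesis by (simp only: e ball_UNIV)
    qed
    then show ?thesis unfolding Rdef by simp
  qed
  ultimately have evR0: "even (CARD('n) - vec.dim R)" by (simp add: card_cart_basis)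
  have "vec.dim R \<le> CARD('n)" by (rule dim_le_CARD)
  then have evR: "even (vec.dim R)" using ev evR0 by (rule even_sub_aux)
  have injQ: "inj_on Q R" using nd unfolding qf_nondegenerate_def R_def .
  have zR: "0 \<in> R" using subR vec.subspace_0 by blast
  have Q0: "Q 0 = 0" by (rule qf_zero[OF qf])
  have RQ: "\<And>z. z \<in> R \<Longrightarrow> Q z = 0 \<Longrightarrow> z = 0"
    using injQ zR Q0 by (metis inj_onD)
  have "R \<subseteq> {0}"
  proof
    fix x assume xR: "x \<in> R"
    show "x \<in> {0}"
    proof (rule ccontr)
      assume "x \<notin> {0}"
      then have x0: "x \<noteq> 0" by simp
      have Qx: "Q x \<noteq> 0" using RQ xR x0 by blast
      have "R \<subseteq> vec.span {x}"
      proof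
        fix f assume fR: "f \<in> R"
        obtain c where c: "c * c = Q f / Q x" using sq by blast
        define z where "z = f + c *s x"
        have "c *s x \<in> R" using subR xR by (rule vec.subspace_scale)
        then have zR: "z \<in> R" unfolding z_def using subR fR by (simp add: vec.subspace_add)
        have "polar Q f (c *s x) = 0" using fR unfolding Rdef by simp
        then have e1: "Q z = Q f + Q (c *s x)" unfolding z_def qf_add by simp
        have e2: "Q (c *s x) = c\<^sup>2 * Q x" by (rule qf_scale[OF qf])
        have e3: "c\<^sup>2 * Q x = Q f" using c Qx by (simp add: power2_eq_square field_simps)
        have e4: "Q f + Q f = 2 * Q f" by (rule mult_2[symmetric])
        have "Q z = 2 * Q f" unfolding e1 e2 e3 e4 ..
        then have "Q z = 0" using two by simp
        then have "z = 0" using RQ zR by blast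
        then have "f = (- c) *s x" unfolding z_def by (simp add: eq_neg_iff_add_eq_0)
        then show "f \<in> vec.span {x}" unfolding vec.span_singleton by (rule range_eqI)
      qed
      then have "vec.dim R \<le> vec.dim (vec.span {x})" by (rule vec.dim_subset)
      then have "vec.dim R \<le> 1" using x0 by simp
      then have "vec.dim R = 0" using evR by (rule le1_even)
      then have "R \<subseteq> {0}" by (simp only: vec.dim_eq_0)
      then show False using xR x0 by blast
    qed
  qed
  then show ?thesis unfolding Rdef by blast
qed

lemma final_arith:
  fixes D y r u w k s st a :: nat
  assumes "even D" "even (y - r)" "y + u = D" "r = w + k" "r \<le> y" "w \<le> u" "s = u + a" "st = w + a"
  shows "(s - st) mod 2 = k mod 2"
proof -
  obtain Z where Z: "u = w + Z" using assms(6) le_Suc_ex by blast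
  obtain X where X: "y = r + X" using assms(5) le_Suc_ex by blast
  have 1: "s - st = Z" using assms Z by simp
  have ex: "even X" using assms(2) X by simp
  have eq: "X + 2 * w + k + Z = D" using assms(3,4) X Z by simp
  have "even (X + 2 * w + k + Z)" using eq assms(1) by simp
  then have "even (k + Z)" using ex by simp
  then show ?thesis unfolding 1 by (metis even_add even_iff_mod_2_eq_zero odd_iff_mod_2_eq_one)
qed

lemma half_aux: "a + b = (c::nat) \<Longrightarrow> even c \<Longrightarrow> b = c div 2 \<Longrightarrow> a \<le> b"
  by presburger

lemma lagr_orth:
  fixes Q :: "'k::field ^ 'n \<Rightarrow> 'k"
  assumes qf: "quadratic_form Q" and nd: "\<forall>x. (\<forall>y. polar Q x y = 0) \<longrightarrow> x = 0"
    and ev: "even CARD('n)"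
    and L: "vec.subspace L" "\<forall>x\<in>L. Q x = 0" "vec.dim L = CARD('n) div 2"
  shows "orth (polar Q) L = L"
proof -
  have bl: "bil (polar Q)" by (rule qf_bil[OF qf])
  have sub: "L \<subseteq> orth (polar Q) L"
  proof
    fix x assume x: "x \<in> L"
    have "polar Q x u = 0" if u: "u \<in> L" for u
    proof -
      have "x + u \<in> L" using L(1) x u by (rule vec.subspace_add)
      then show ?thesis unfolding polar_def using L(2) x u by simp
    qed
    then show "x \<in> orth (polar Q) L" unfolding orth_def by simp
  qed
  have "vec.dim (orth (polar Q) L) + vec.dim L = CARD('n)" by (rule orth_dim[OF bl nd L(1)])
  then have "vec.dim (orth (polar Q) L) \<le> vec.dim L" using ev L(3) by (rule half_aux)
  then have "L = orth (polar Q) L"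
    by (rule vec.subspace_dim_equal[OF L(1) orth_subspace[OF bl] sub])
  then show ?thesis by (rule sym)
qed

theorem mainTheorem10:
  fixes Q :: "'k::field ^ 'n \<Rightarrow> 'k" and N :: "'k ^ 'n \<Rightarrow> 'k ^ 'n"
  assumes "CHAR('k) = 2"
    and "finite (UNIV :: 'k set) \<or> alg_closed_type TYPE('k)"
    and "even CARD('n)"
    and "quadratic_form Q"
    and "qf_nondegenerate Q"
    and "\<exists>S. lagrangian Q S"
    and "N \<in> M_tilde Q"
  shows "\<forall>S. lagrangian Q S \<longrightarrow>
           (vec.dim S - vec.dim (S \<inter> (\<lambda>x. x + N x) ` S)) mod 2 = vec.dim {x. N x = 0} mod 2"
proof (intro allI impI)
  fix S assume lagS: "lagrangian Q S"
  have qf: "quadratic_form Q" by (rule assms(4))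
  have ev: "even CARD('n)" by (rule assms(3))
  define B where "B = polar Q"
  have two: "(2::'k) = 0" by (rule char2_two[OF assms(1)])
  have sq: "\<And>a::'k. \<exists>c. c * c = a" using sqrt_exists[OF two assms(2)] by blast
  have bl: "bil B" unfolding B_def by (rule qf_bil[OF qf])
  have sym: "\<And>x y. B x y = B y x" unfolding B_def by (rule polar_sym)
  have symA: "\<forall>x y. B x y = B y x" using sym by blast
  have nd: "\<forall>x. (\<forall>y. B x y = 0) \<longrightarrow> x = 0"
    unfolding B_def by (rule nondeg[OF qf two sq assms(5) ev])
  have subS: "vec.subspace S" and dimS: "vec.dim S = CARD('n) div 2" and QS: "\<forall>x\<in>S. Q x = 0"
    using lagS unfolding lagrangian_def by auto
  have linN: "Vector_Spaces.linear (*s) (*s) N" and nil: "\<exists>m. \<forall>x. (N ^^ m) x = 0"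
    and QN: "\<forall>x. Q (N x) = - polar Q x (N x)"
    using assms(7) unfolding M_tilde_def by auto
  interpret lN: Vector_Spaces.linear "(*s)" "(*s)" N by (rule linN)
  define g where "g = (\<lambda>x. x + N x)"
  have ling: "Vector_Spaces.linear (*s) (*s) g"
  proof (rule vec_linearI)
    fix x y show "g (x + y) = g x + g y" unfolding g_def by (simp add: lN.add algebra_simps)
  next
    fix c x show "g (c *s x) = c *s g x" unfolding g_def by (simp add: lN.scale vec.scale_right_distrib)
  qed
  interpret lg: Vector_Spaces.linear "(*s)" "(*s)" g by (rule ling)
  have g0: "z = 0" if gz: "g z = 0" for z
  proof -
    have Nz: "N z = - z" using gz unfolding g_def by (simp add: eq_neg_iff_add_eq_0 add.commute)
    have pw: "(N ^^ k) z = ((-1) ^ k) *s z" for k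
    proof (induction k)
      case 0 then show ?case by simp
    next
      case (Suc k)
      have "(N ^^ Suc k) z = N ((N ^^ k) z)" by simp
      also have "\<dots> = N (((-1) ^ k) *s z)" using Suc by simp
      also have "\<dots> = ((-1) ^ k) *s N z" by (rule lN.scale)
      also have "\<dots> = ((-1) ^ Suc k) *s z" using Nz by simp
      finally show ?case .
    qed
    obtain m where m: "\<forall>x. (N ^^ m) x = 0" using nil by blast
    have "((-1::'k) ^ m) *s z = 0" using pw[of m] m by simp
    moreover have "(-1::'k) ^ m \<noteq> 0" by simp
    ultimately show "z = 0" by simp
  qed
  have ginj: "inj g"
  proof (rule injI)
    fix x y assume "g x = g y"
    then have "g (x - y) = 0" by (simp add: lg.diff)
    then have "x - y = 0" by (rule g0)
    then show "x = y" by simp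
  qed
  have Qg: "Q (g x) = Q x" for x
  proof -
    have "Q (g x) = Q x + Q (N x) + polar Q x (N x)" unfolding g_def by (rule qf_add)
    then show ?thesis using QN by simp
  qed
  have Bg: "B (g x) (g y) = B x y" for x y
  proof -
    have "B (g x) (g y) = Q (g x + g y) - Q (g x) - Q (g y)" unfolding B_def polar_def ..
    also have "g x + g y = g (x + y)" by (simp add: lg.add)
    finally show ?thesis unfolding Qg B_def polar_def .
  qed
  have key: "B x (N y) = - B (N x) (g y)" for x y
  proof -
    have "B (g x) (g y) = B x (g y) + B (N x) (g y)" unfolding g_def by (rule bilD(1)[OF bl])
    also have "B x (g y) = B x y + B x (N y)" unfolding g_def by (rule bilD(3)[OF bl])
    finally have "B x y = B x y + B x (N y) + B (N x) (g y)" unfolding Bg .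
    then show ?thesis by (simp add: eq_neg_iff_add_eq_0 add.assoc)
  qed
  define T where "T = g ` S"
  have subT: "vec.subspace T" unfolding T_def by (rule lg.subspace_image[OF subS])
  have dimT: "vec.dim T = vec.dim S" unfolding T_def
    by (rule vec.dim_image_eq[OF ling]) (meson ginj inj_on_subset subset_UNIV)
  have QT: "\<forall>x\<in>T. Q x = 0" unfolding T_def using QS Qg by auto
  have oS: "orth B S = S" unfolding B_def
    by (rule lagr_orth[OF qf nd[unfolded B_def] ev subS QS dimS])
  have oT: "orth B T = T" unfolding B_def
    by (rule lagr_orth[OF qf nd[unfolded B_def] ev subT QT]) (simp add: dimT dimS)
  define U where "U = N ` S"
  have subU: "vec.subspace U" unfolding U_def by (rule lN.subspace_image[OF subS])
  define Y where "Y = {x. N x \<in> T}"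
  have YU: "Y = orth B U"
  proof (rule set_eqI)
    fix x
    have "x \<in> Y \<longleftrightarrow> N x \<in> orth B T" unfolding Y_def oT by simp
    also have "\<dots> \<longleftrightarrow> (\<forall>s\<in>S. B (N x) (g s) = 0)" unfolding orth_def T_def by simp
    also have "\<dots> \<longleftrightarrow> (\<forall>s\<in>S. B x (N s) = 0)" using key by simp
    also have "\<dots> \<longleftrightarrow> x \<in> orth B U" unfolding orth_def U_def by simp
    finally show "x \<in> Y \<longleftrightarrow> x \<in> orth B U" .
  qed
  have subY: "vec.subspace Y" unfolding YU by (rule orth_subspace[OF bl])
  have ooU: "orth B (orth B U) = U" by (rule orth_orth[OF bl symA nd subU])
  define R where "R = {y\<in>Y. \<forall>x\<in>Y. B x (N y) = 0}"
  have R2: "R = {y. y \<in> Y \<and> N y \<in> U}"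
  proof (rule set_eqI)
    fix y
    have "(\<forall>x\<in>Y. B x (N y) = 0) \<longleftrightarrow> (\<forall>x\<in>Y. B (N y) x = 0)" using sym by simp
    also have "\<dots> \<longleftrightarrow> N y \<in> orth B Y" unfolding orth_def by simp
    also have "\<dots> \<longleftrightarrow> N y \<in> U" unfolding YU ooU ..
    finally show "y \<in> R \<longleftrightarrow> y \<in> {y. y \<in> Y \<and> N y \<in> U}" unfolding R_def by simp
  qed
  define a where "a = (\<lambda>x y. B x (N y))"
  have bla: "bil a" unfolding bil_def a_def using bilD[OF bl] by (simp add: lN.add lN.scale)
  have alt: "\<forall>y\<in>Y. a y y = 0"
  proof
    fix y assume "y \<in> Y"
    then have "Q (N y) = 0" using QT unfolding Y_def by simp
    then show "a y y = 0" using QN unfolding a_def B_def by simp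
  qed
  have evYR: "even (vec.dim Y - vec.dim R)"
    using alt_even[OF bla subY alt] unfolding R_def a_def .
  have dimYU: "vec.dim Y + vec.dim U = CARD('n)" unfolding YU by (rule orth_dim[OF bl nd subU])
  have subR: "vec.subspace R" unfolding R2 vec.subspace_def
    using subY subU unfolding vec.subspace_def by (simp add: lN.add lN.scale)
  have RY: "R \<subseteq> Y" unfolding R_def by blast
  have zT: "0 \<in> T" using subT by (rule vec.subspace_0)
  have zU: "0 \<in> U" using subU by (rule vec.subspace_0)
  have NR: "N ` R = U \<inter> T"
  proof
    show "N ` R \<subseteq> U \<inter> T" unfolding R2 Y_def by auto
    show "U \<inter> T \<subseteq> N ` R"
    proof
      fix z assume z: "z \<in> U \<inter> T"
      then obtain s where s: "s \<in> S" "z = N s" unfolding U_def by blast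
      have "s \<in> R" unfolding R2 Y_def using z s U_def by auto
      then show "z \<in> N ` R" using s by blast
    qed
  qed
  have kR: "{x\<in>R. N x = 0} = {x. N x = 0}" unfolding R2 Y_def using zT zU by auto
  have dimR: "vec.dim R = vec.dim (U \<inter> T) + vec.dim {x. N x = 0}"
    using rank_nullity_vec[OF linN subR] unfolding NR kR .
  have dimSU: "vec.dim S = vec.dim U + vec.dim {x\<in>S. N x = 0}"
    using rank_nullity_vec[OF linN subS] unfolding U_def .
  have ST: "s \<in> T \<longleftrightarrow> N s \<in> T" if "s \<in> S" for s
  proof -
    have gT: "g s \<in> T" unfolding T_def using that by blast
    have "N s = g s - s" unfolding g_def by simp
    moreover have "s = g s - N s" unfolding g_def by simp
    ultimately show ?thesis using gT subT vec.subspace_diff by metis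
  qed
  have subST: "vec.subspace (S \<inter> T)" using subS subT by (rule vec.subspace_inter)
  have NST: "N ` (S \<inter> T) = U \<inter> T"
  proof
    show "N ` (S \<inter> T) \<subseteq> U \<inter> T" unfolding U_def using ST by auto
    show "U \<inter> T \<subseteq> N ` (S \<inter> T)"
    proof
      fix z assume z: "z \<in> U \<inter> T"
      then obtain s where s: "s \<in> S" "z = N s" unfolding U_def by blast
      have "s \<in> T" using ST[OF s(1)] z s(2) by simp
      then show "z \<in> N ` (S \<inter> T)" using s by blast
    qed
  qed
  have kST: "{x\<in>S \<inter> T. N x = 0} = {x\<in>S. N x = 0}" using ST zT by auto
  have dimST: "vec.dim (S \<inter> T) = vec.dim (U \<inter> T) + vec.dim {x\<in>S. N x = 0}"
    using rank_nullity_vec[OF linN subST] unfolding NST kST .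
  have le1: "vec.dim R \<le> vec.dim Y" using RY by (rule vec.dim_subset)
  have le2: "vec.dim (U \<inter> T) \<le> vec.dim U" by (rule vec.dim_subset) blast
  have "(vec.dim S - vec.dim (S \<inter> T)) mod 2 = vec.dim {x. N x = 0} mod 2"
    by (rule final_arith[OF ev evYR dimYU dimR le1 le2 dimSU dimST])
  then show "(vec.dim S - vec.dim (S \<inter> (\<lambda>x. x + N x) ` S)) mod 2 = vec.dim {x. N x = 0} mod 2"
    unfolding T_def g_def .
qed

end
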